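(* Let $f$ be a symmetric probability density on $\mathbb R$ with distribution function $F$ and finite variance $\sigma^2(f)=\int_{\mathbb R}x^2f(x)\,dx>0$. Put $v(x)=\int_{-\infty}^x uf(u)\,du$ and $q(s)=\int_{-\infty}^s v(x)f(x)\,dx$. Then $$45\Big(\int_{\mathbb R}q(s)f(s)\,ds\Big)^2<\sigma^2(f).$$ Equivalently, the integrated Chapman–Moses statistic $\bar\omega_n^1=\int_{\mathbb R}\sqrt n\int_{-\infty}^s(F_n(t)-F(t))\,dF(t)\,dF(s)$ is never locally asymptotically optimal in the Bahadur sense under the skew alternative $h(x,\theta)=2f(x)G(\theta x)$.
   Context: $F_n$ denotes the empirical distribution function of the sample. The local Bahadur efficiency of $\bar\omega_n^1$ under the skew alternative equals $45(\int q f)^2/\sigma^2(f)$, and local asymptotic optimality means that this efficiency equals $1$. *)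

theory Defs
  imports "HOL-Analysis.Analysis"
begin

definition sigma2 :: "(real \<Rightarrow> real) \<Rightarrow> real" where
  "sigma2 f = (LINT x|lborel. x\<^sup>2 * f x)"

definition vfun :: "(real \<Rightarrow> real) \<Rightarrow> real \<Rightarrow> real" where
  "vfun f x = (LINT u:{..x}|lborel. u * f u)"

definition qfun :: "(real \<Rightarrow> real) \<Rightarrow> real \<Rightarrow> real" where
  "qfun f s = (LINT x:{..s}|lborel. vfun f x * f x)"

end

theory Submission
  imports Defs "HOL-Probability.Probability"
begin



locale symd =
  fixes f :: "real \<Rightarrow> real"
  assumes meas[measurable]: "f \<in> borel_measurable borel"
    and nonneg: "\<And>x. f x \<ge> 0"
    and intf: "integrable lborel f"
    and total: "(LINT x|lborel. f x) = 1"
    and symm: "\<And>x. f (- x) = f x"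
    and fin_var: "integrable lborel (\<lambda>x. x\<^sup>2 * f x)"
begin

definition "M = density lborel f"

lemma sets_M[measurable_cong, simp]: "sets M = sets borel"
  by (simp add: M_def)
lemma space_M[simp]: "space M = UNIV"
  by (simp add: M_def)

lemma prob_M: "prob_space M"
proof
  have "emeasure M (space M) = (\<integral>\<^sup>+ x. ennreal (f x) \<partial>lborel)"
    by (simp add: M_def emeasure_density)
  also have "\<dots> = ennreal (LINT x|lborel. f x)"
    using intf nonneg by (intro nn_integral_eq_integral) auto
  finally show "emeasure M (space M) = 1" using total by simp
qed

sublocale P: real_distribution M
  using prob_M by (simp add: real_distribution_def real_distribution_axioms_def)

lemma int_M: "g \<in> borel_measurable borel \<Longrightarrow> integral\<^sup>L M g = (\<integral>x. f x * g x \<partial>lborel)"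
  unfolding M_def by (subst integral_density) (auto simp: nonneg)

lemma integrable_M: "g \<in> borel_measurable borel \<Longrightarrow> integrable M g \<longleftrightarrow> integrable lborel (\<lambda>x. f x * g x)"
  unfolding M_def by (subst integrable_density) (auto simp: nonneg)

lemma point_null: "measure M {a} = 0"
proof -
  have "AE x in lborel. x \<in> {a} \<longrightarrow> ennreal (f x) = 0"
    using AE_lborel_singleton[of a] by eventually_elim auto
  then have "{a} \<in> null_sets M"
    unfolding M_def by (subst null_sets_density_iff) auto
  then show ?thesis by (auto simp: measure_def dest: null_setsD1)
qed

definition "F x = measure M {..x}"

lemma F_cdf: "F = cdf M" by (simp add: F_def[abs_def] cdf_def)

lemma F_mono: "x \<le> y \<Longrightarrow> F x \<le> F y"
  unfolding F_cdf by (rule P.cdf_nondecreasing)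

lemma F_nonneg: "0 \<le> F x" unfolding F_cdf by (rule P.cdf_nonneg)
lemma F_le1: "F x \<le> 1" unfolding F_cdf by (rule P.cdf_bounded_prob)

lemma F_cont: "isCont F x" unfolding F_cdf using P.isCont_cdf point_null by simp

lemma F_contOn: "continuous_on S F"
  using F_cont by (simp add: continuous_at_imp_continuous_on)

lemma F_meas[measurable]: "F \<in> borel_measurable borel"
  using F_contOn borel_measurable_continuous_onI by blast

lemma F_top: "(F \<longlongrightarrow> 1) at_top" unfolding F_cdf by (rule P.cdf_lim_at_top_prob)
lemma F_bot: "(F \<longlongrightarrow> 0) at_bot" unfolding F_cdf by (rule P.cdf_lim_at_bot)

lemma F_int: "F x = (\<integral>u. indicator {..x} u \<partial>M)"
  unfolding F_def by simp

lemma meas_Ici: "measure M {x..} = 1 - F x"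
proof -
  have "measure M {x..} = 1 - measure M (UNIV - {x..})"
    using P.prob_compl[of "{x..}"] by simp
  also have "UNIV - {x..} = {..<x}" by auto
  also have "measure M {..<x} = F x"
  proof -
    have "measure M {..x} = measure M ({..<x} \<union> {x})" by (metis ivl_disj_un_singleton(2))
    also have "\<dots> = measure M {..<x} + measure M {x}"
      by (rule P.finite_measure_Union) auto
    finally show ?thesis using point_null by (simp add: F_def)
  qed
  finally show ?thesis .
qed

lemma refl_int: "(g::real\<Rightarrow>real) \<in> borel_measurable borel \<Longrightarrow> (\<integral>x. g (- x) \<partial>M) = (\<integral>x. g x \<partial>M)"
proof -
  assume [measurable]: "g \<in> borel_measurable borel"
  have "(\<integral>x. g x \<partial>M) = (\<integral>x. f x * g x \<partial>lborel)" by (rule int_M) simp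
  also have "\<dots> = (\<integral>x. f (0 + (-1) * x) * g (0 + (-1) * x) \<partial>lborel)"
    using lborel_integral_real_affine[of "-1" "\<lambda>x. f x * g x" 0] by simp
  also have "\<dots> = (\<integral>x. f x * g (- x) \<partial>lborel)" using symm by simp
  also have "\<dots> = (\<integral>x. g (- x) \<partial>M)" by (rule int_M[symmetric]) simp
  finally show ?thesis by simp
qed

lemma F_neg: "F (- y) = 1 - F y"
proof -
  have "F (- y) = (\<integral>u. indicator {..-y} (- u) \<partial>M)"
    unfolding F_int by (rule refl_int[symmetric]) simp
  also have "\<dots> = (\<integral>u. indicator {y..} u \<partial>M)"
    by (rule Bochner_Integration.integral_cong) (auto split: split_indicator)
  also have "\<dots> = 1 - F y" using meas_Ici by simp
  finally show ?thesis .
qed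

lemma level_set:
  assumes t: "0 < t" "t < 1"
  shows "\<exists>a. {x. F x \<le> t} = {..a} \<and> F a = t"
proof -
  have "eventually (\<lambda>x. F x < t) at_bot" using order_tendstoD(2)[OF F_bot t(1)] .
  then obtain x0 where x0: "\<And>x. x \<le> x0 \<Longrightarrow> F x < t" by (auto simp: eventually_at_bot_linorder)
  have "eventually (\<lambda>x. F x > t) at_top" using order_tendstoD(1)[OF F_top t(2)] .
  then obtain b where b: "\<And>x. x \<ge> b \<Longrightarrow> F x > t" by (auto simp: eventually_at_top_linorder)
  define S where "S = {x. F x \<le> t}"
  have x0S: "x0 \<in> S" using x0[of x0] by (simp add: S_def)
  have Sb: "x < b" if "x \<in> S" for x
  proof (rule ccontr)
    assume "\<not> x < b"
    then have "F x > t" using b[of x] by simp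
    with that show False by (simp add: S_def)
  qed
  have bdd: "bdd_above S" unfolding bdd_above_def using Sb less_imp_le by blast
  have cl: "closed S" unfolding S_def
    by (rule closed_Collect_le) (auto intro: F_contOn)
  define a where "a = Sup S"
  have aS: "a \<in> S" unfolding a_def using closed_contains_Sup[OF _ bdd cl] x0S by auto
  have i1: "F x0 \<le> t" using x0[of x0] by simp
  have i2: "t \<le> F b" using b[of b] by simp
  have i3: "x0 \<le> b" using Sb[OF x0S] by simp
  obtain c where c: "x0 \<le> c" "c \<le> b" "F c = t"
    using IVT'[OF i1 i2 i3 F_contOn] by blast
  have "c \<in> S" using c by (simp add: S_def)
  then have "c \<le> a" unfolding a_def using bdd by (rule cSup_upper)
  then have "F a \<ge> t" using F_mono[OF \<open>c \<le> a\<close>] c(3) by simp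
  with aS have Fa: "F a = t" by (simp add: S_def)
  have "S = {..a}"
  proof
    show "S \<subseteq> {..a}" using bdd by (auto simp: a_def intro: cSup_upper)
    show "{..a} \<subseteq> S" using Fa F_mono by (auto simp: S_def)
  qed
  with Fa show ?thesis by (auto simp: S_def)
qed

lemma prob_F_le: 
  assumes t: "0 \<le> t" "t \<le> 1"
  shows "measure M {x \<in> space M. F x \<le> t} = t"
proof -
  have mid: "measure M {x \<in> space M. F x \<le> s} = s" if "0 < s" "s < 1" for s
  proof -
    from level_set[OF that] obtain a where "{x. F x \<le> s} = {..a}" "F a = s" by blast
    then show ?thesis by (simp add: F_def)
  qed
  consider "t = 0" | "0 < t \<and> t < 1" | "t = 1" using t by linarith
  then show ?thesis
  proof cases
    case 1
    have "measure M {x \<in> space M. F x \<le> 0} \<le> s" if "0 < s" "s < 1" for s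
    proof -
      have "measure M {x \<in> space M. F x \<le> 0} \<le> measure M {x \<in> space M. F x \<le> s}"
        using that by (intro P.finite_measure_mono) auto
      with mid[OF that] show ?thesis by simp
    qed
    note sm = this
    have "measure M {x \<in> space M. F x \<le> 0} \<le> 0"
    proof (rule ccontr)
      assume "\<not> ?thesis"
      then have p: "measure M {x \<in> space M. F x \<le> 0} > 0" by simp
      have "measure M {x \<in> space M. F x \<le> 0} \<le> measure M {x \<in> space M. F x \<le> 0} / 2"
        using p P.prob_le_1[of "{x \<in> space M. F x \<le> 0}"] sm[of "measure M {x \<in> space M. F x \<le> 0} / 2"]
        by linarith
      with p show False by linarith
    qed
    with 1 show ?thesis by (simp add: measure_nonneg antisym)
  next
    case 2 then show ?thesis using mid by auto
  next
    case 3
    have "{x \<in> space M. F x \<le> 1} = space M" using F_le1 by auto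
    with 3 P.prob_space show ?thesis by simp
  qed
qed

lemma F_unif: "distributed M lborel F (\<lambda>x. indicator {0..1} x / measure lborel {0..(1::real)})"
  proof (rule P.uniform_distrI_borel_atLeastAtMost)
  fix t :: real assume "0 \<le> t" "t \<le> 1"
  then show "measure M {x \<in> space M. F x \<le> t} = (t - 0) / (1 - 0)" using prob_F_le[of t] by simp
qed simp_all

lemma EF: "(\<integral>x. F x \<partial>M) = 1/2"
  using P.uniform_distributed_expectation[OF F_unif] by simp

lemma VF: "(\<integral>x. (F x - 1/2)\<^sup>2 \<partial>M) = 1/12"
  using P.uniform_distributed_variance[OF F_unif] EF by simp

lemma PPax: "pair_prob_space M M"
  unfolding pair_prob_space_def pair_sigma_finite_def
  using P.prob_space_axioms P.sigma_finite_measure_axioms by blast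

lemma point_null_set: "{a} \<in> null_sets M"
proof -
  have "AE x in lborel. x \<in> {a} \<longrightarrow> ennreal (f x) = 0"
    using AE_lborel_singleton[of a] by eventually_elim auto
  then show "{a} \<in> null_sets M"
    unfolding M_def by (subst null_sets_density_iff) auto
qed

lemma AE_ne: "AE x in M. x \<noteq> a"
  using AE_not_in[OF point_null_set[of a]] by simp

lemma int_u2: "integrable M (\<lambda>u. u\<^sup>2)"
  using fin_var by (subst integrable_M) (auto simp: mult.commute)

lemma int_u: "integrable M (\<lambda>u. u)"
proof -
  have i: "integrable M (\<lambda>u. 1 + u\<^sup>2)" using int_u2 by simp
  show ?thesis
  proof (rule Bochner_Integration.integrable_bound[OF i])
    show "AE x in M. norm x \<le> norm (1 + x\<^sup>2)"
    proof (rule AE_I2)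
      fix x :: real
      have h: "0 \<le> (\<bar>x\<bar> - 1) * (\<bar>x\<bar> - 1)" by simp
      have "(\<bar>x\<bar> - 1) * (\<bar>x\<bar> - 1) = x\<^sup>2 - 2 * \<bar>x\<bar> + 1"
        by (simp add: power2_eq_square algebra_simps abs_mult_self_eq)
      with h have "\<bar>x\<bar> \<le> 1 + x\<^sup>2" by linarith
      then show "norm x \<le> norm (1 + x\<^sup>2)" by simp
    qed
  qed simp
qed

lemma sigma2_eq: "sigma2 f = (\<integral>u. u\<^sup>2 \<partial>M)"
  unfolding sigma2_def by (subst int_M) (auto simp: mult.commute)

lemma bnd_int:
  fixes g :: "real \<Rightarrow> real" and B :: real
  assumes "g \<in> borel_measurable borel" "\<And>x. \<bar>g x\<bar> \<le> B"
  shows "\<bar>\<integral>x. g x \<partial>M\<bar> \<le> B"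
proof -
  have ig: "integrable M g" using assms by (intro P.integrable_const_bound[where B=B]) auto
  have "\<bar>\<integral>x. g x \<partial>M\<bar> \<le> (\<integral>x. \<bar>g x\<bar> \<partial>M)"
    using integral_norm_bound[of M g] by simp
  also have "\<dots> \<le> (\<integral>x. B \<partial>M)"
    using assms ig by (intro integral_mono) auto
  finally show ?thesis using P.prob_space by simp
qed

lemma int_uG:
  assumes [measurable]: "G \<in> borel_measurable borel" and b: "\<And>x. \<bar>G x\<bar> \<le> B"
  shows "integrable M (\<lambda>u. u * G u)"
proof (rule Bochner_Integration.integrable_bound)
  show "integrable M (\<lambda>u. B * \<bar>u\<bar>)" using int_u by auto
  show "AE x in M. norm (x * G x) \<le> norm (B * \<bar>x\<bar>)"
  proof (rule AE_I2)
    fix x :: real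
    have "B \<ge> 0" using b[of x] by linarith
    have "\<bar>x * G x\<bar> \<le> \<bar>x\<bar> * B" unfolding abs_mult using b[of x] by (intro mult_left_mono) auto
    then show "norm (x * G x) \<le> norm (B * \<bar>x\<bar>)" using \<open>B \<ge> 0\<close> by (simp add: mult.commute)
  qed
qed simp

definition "vv x = (\<integral>u. (if u \<le> x then u else 0) \<partial>M)"

lemma vv_meas[measurable]: "vv \<in> borel_measurable borel"
  unfolding vv_def[abs_def] by measurable

lemma vv_int: "integrable M (\<lambda>u. if u \<le> x then u else 0)"
  by (rule Bochner_Integration.integrable_bound[OF int_u]) auto

definition "mm = (\<integral>u. \<bar>u\<bar> \<partial>M)"

lemma vv_bnd: "\<bar>vv x\<bar> \<le> mm"
proof -
  have "\<bar>vv x\<bar> \<le> (\<integral>u. \<bar>if u \<le> x then u else 0\<bar> \<partial>M)"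
    unfolding vv_def using integral_norm_bound[of M "\<lambda>u. if u \<le> x then u else 0"] by simp
  also have "\<dots> \<le> mm" unfolding mm_def
    using int_u vv_int[of x] by (intro integral_mono) auto
  finally show ?thesis .
qed

lemma vfun_eq: "vfun f x = vv x"
  unfolding vfun_def vv_def set_lebesgue_integral_def
  by (subst int_M) (auto intro!: Bochner_Integration.integral_cong split: split_indicator)

definition "qq s = (\<integral>x. (if x \<le> s then vv x else 0) \<partial>M)"

lemma qq_meas[measurable]: "qq \<in> borel_measurable borel"
  unfolding qq_def[abs_def] by measurable

lemma qfun_eq: "qfun f s = qq s"
  unfolding qfun_def qq_def vfun_eq set_lebesgue_integral_def
  by (subst int_M) (auto intro!: Bochner_Integration.integral_cong split: split_indicator)

lemma I_eq: "(LINT s|lborel. qfun f s * f s) = (\<integral>s. qq s \<partial>M)"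
  unfolding qfun_eq by (subst int_M) (auto simp: mult.commute)

lemma fub1: "(\<integral>s. qq s \<partial>M) = (\<integral>x. vv x * (1 - F x) \<partial>M)"
proof -
  interpret PP: pair_prob_space M M by (rule PPax)
  let ?g = "\<lambda>x s. if x \<le> s then vv x else 0"
  have int: "integrable (M \<Otimes>\<^sub>M M) (case_prod ?g)"
  proof (rule PP.P.integrable_const_bound[where B=mm])
    show "AE p in M \<Otimes>\<^sub>M M. norm (case_prod ?g p) \<le> mm"
      by (rule AE_I2) (auto simp: vv_bnd order_trans[OF _ vv_bnd] intro: order_trans[OF abs_ge_zero vv_bnd])
  qed measurable
  have "(\<integral>s. qq s \<partial>M) = (\<integral>s. \<integral>x. ?g x s \<partial>M \<partial>M)" by (simp add: qq_def)
  also have "\<dots> = (\<integral>x. \<integral>s. ?g x s \<partial>M \<partial>M)" by (rule PP.Fubini_integral[OF int])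
  also have "\<dots> = (\<integral>x. vv x * (1 - F x) \<partial>M)"
  proof (rule Bochner_Integration.integral_cong[OF refl])
    fix x
    have "(\<integral>s. ?g x s \<partial>M) = (\<integral>s. indicator {x..} s * vv x \<partial>M)"
      by (rule Bochner_Integration.integral_cong) (auto split: split_indicator)
    also have "\<dots> = measure M {x..} * vv x" by simp
    finally show "(\<integral>s. ?g x s \<partial>M) = vv x * (1 - F x)" by (simp add: meas_Ici)
  qed
  finally show ?thesis .
qed

definition "H u = (\<integral>x. (if u \<le> x then 1 - F x else 0) \<partial>M)"

lemma H_meas[measurable]: "H \<in> borel_measurable borel"
  unfolding H_def[abs_def] by measurable

lemma H_bnd: "\<bar>H u\<bar> \<le> 1"
  unfolding H_def by (rule bnd_int) (auto simp: F_le1 F_nonneg)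

lemma fub2: "(\<integral>x. vv x * (1 - F x) \<partial>M) = (\<integral>u. u * H u \<partial>M)"
proof -
  interpret PP: pair_prob_space M M by (rule PPax)
  let ?g = "\<lambda>u x. if u \<le> x then u * (1 - F x) else 0"
  have iabs: "integrable (M \<Otimes>\<^sub>M M) (\<lambda>p. \<bar>fst p\<bar>)"
  proof (rule PP.Fubini_integrable)
    show "integrable M (\<lambda>x. \<integral>y. norm \<bar>fst (x, y)\<bar> \<partial>M)"
      using int_u P.prob_space by simp
  qed (auto simp: P.prob_space)
  have int: "integrable (M \<Otimes>\<^sub>M M) (case_prod ?g)"
  proof (rule Bochner_Integration.integrable_bound[OF iabs])
    show "AE p in M \<Otimes>\<^sub>M M. norm (case_prod ?g p) \<le> norm \<bar>fst p\<bar>"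
    proof (rule AE_I2)
      fix p :: "real \<times> real"
      obtain u x where p: "p = (u, x)" by fastforce
      have "\<bar>u * (1 - F x)\<bar> \<le> \<bar>u\<bar> * 1" unfolding abs_mult
        by (intro mult_left_mono) (auto simp: F_le1 F_nonneg)
      then show "norm (case_prod ?g p) \<le> norm \<bar>fst p\<bar>" by (auto simp: p)
    qed
  qed measurable
  have "(\<integral>x. vv x * (1 - F x) \<partial>M) = (\<integral>x. \<integral>u. ?g u x \<partial>M \<partial>M)"
  proof (rule Bochner_Integration.integral_cong[OF refl])
    fix x
    have "vv x * (1 - F x) = (\<integral>u. (if u \<le> x then u else 0) * (1 - F x) \<partial>M)"
      unfolding vv_def by simp
    also have "\<dots> = (\<integral>u. ?g u x \<partial>M)"
      by (rule Bochner_Integration.integral_cong) auto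
    finally show "vv x * (1 - F x) = (\<integral>u. ?g u x \<partial>M)" .
  qed
  also have "\<dots> = (\<integral>u. \<integral>x. ?g u x \<partial>M \<partial>M)" by (rule PP.Fubini_integral[OF int])
  also have "\<dots> = (\<integral>u. u * H u \<partial>M)"
  proof (rule Bochner_Integration.integral_cong[OF refl])
    fix u
    have "(\<integral>x. ?g u x \<partial>M) = (\<integral>x. u * (if u \<le> x then 1 - F x else 0) \<partial>M)"
      by (rule Bochner_Integration.integral_cong) auto
    then show "(\<integral>x. ?g u x \<partial>M) = u * H u" by (simp add: H_def)
  qed
  finally show ?thesis .
qed

lemma H_neg: "H (-u) = (\<integral>x. (if x \<le> u then F x else 0) \<partial>M)"
proof -
  have e: "(\<integral>x. (\<lambda>x. if -u \<le> x then 1 - F x else 0) (- x) \<partial>M) = (\<integral>x. (\<lambda>x. if -u \<le> x then 1 - F x else 0) x \<partial>M)"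
    by (rule refl_int[of "\<lambda>x. if -u \<le> x then 1 - F x else 0"]) measurable
  have "H (-u) = (\<integral>x. (if -u \<le> - x then 1 - F (- x) else 0) \<partial>M)"
    unfolding H_def[of "-u"] using e by (simp only:)
  also have "\<dots> = (\<integral>x. (if x \<le> u then F x else 0) \<partial>M)"
    by (rule Bochner_Integration.integral_cong) (auto simp: F_neg)
  finally show ?thesis .
qed

lemma H_diff: "H u - H (-u) = 1/2 - F u"
proof -
  have i1: "integrable M (\<lambda>x. if u \<le> x then 1 - F x else 0)"
    by (rule P.integrable_const_bound[where B=1]) (auto simp: F_le1 F_nonneg)
  have i2: "integrable M (\<lambda>x. if x \<le> u then F x else 0)"
    by (rule P.integrable_const_bound[where B=1]) (auto simp: F_le1 F_nonneg)
  have iF: "integrable M F"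
    by (rule P.integrable_const_bound[where B=1]) (auto simp: F_le1 F_nonneg)
  have "H u - H (-u) = (\<integral>x. (if u \<le> x then 1 - F x else 0) - (if x \<le> u then F x else 0) \<partial>M)"
    using i1 i2 by (simp add: H_neg H_def[of u])
  also have "\<dots> = (\<integral>x. indicator {u..} x - F x \<partial>M)"
    by (rule integral_cong_AE) (use AE_ne[of u] in \<open>auto elim!: eventually_mono split: split_indicator\<close>)
  also have "\<dots> = measure M {u..} - (\<integral>x. F x \<partial>M)"
    using iF P.integrable_const_bound[where B=1 and f="indicator {u..} :: real \<Rightarrow> real"] by (subst Bochner_Integration.integral_diff) auto
  finally show ?thesis using meas_Ici EF by simp
qed

lemma I_formula: "2 * (\<integral>s. qq s \<partial>M) = (\<integral>u. u * (1/2 - F u) \<partial>M)"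
proof -
  have iH: "integrable M (\<lambda>u. u * H u)" by (rule int_uG[OF _ H_bnd]) simp
  have iHn: "integrable M (\<lambda>u. u * H (- u))" by (rule int_uG[OF _ H_bnd]) simp
  have "(\<integral>s. qq s \<partial>M) = (\<integral>u. u * H u \<partial>M)" using fub1 fub2 by simp
  moreover have "(\<integral>u. (\<lambda>u. u * H u) (- u) \<partial>M) = (\<integral>u. (\<lambda>u. u * H u) u \<partial>M)"
    by (rule refl_int[of "\<lambda>u. u * H u"]) measurable
  ultimately have "2 * (\<integral>s. qq s \<partial>M) = (\<integral>u. u * H u \<partial>M) - (\<integral>u. u * H (-u) \<partial>M)"
    by simp
  also have "\<dots> = (\<integral>u. u * H u - u * H (-u) \<partial>M)"
    using iH iHn by simp
  also have "\<dots> = (\<integral>u. u * (1/2 - F u) \<partial>M)"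
    by (rule Bochner_Integration.integral_cong) (auto simp: H_diff[symmetric] algebra_simps)
  finally show ?thesis .
qed

lemma F_half: "\<bar>F u - 1/2\<bar> \<le> 1"
  using F_le1[of u] F_nonneg[of u] by linarith

lemma CS: "(\<integral>u. u * (F u - 1/2) \<partial>M)\<^sup>2 \<le> (\<integral>u. u\<^sup>2 \<partial>M) * (1/12)"
proof -
  define g where "g u = F u - 1/2" for u
  have gm[measurable]: "g \<in> borel_measurable borel" unfolding g_def[abs_def] by measurable
  define A where "A = (\<integral>u. u\<^sup>2 \<partial>M)"
  define B where "B = (\<integral>u. u * g u \<partial>M)"
  define C :: real where "C = 1/12"
  have bF: "\<bar>g u\<bar> \<le> 1" for u using F_le1[of u] F_nonneg[of u] unfolding g_def by linarith
  have bF2: "norm ((g u)\<^sup>2) \<le> 1" for u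
  proof -
    have "\<bar>g u\<bar>\<^sup>2 \<le> 1" by (rule power_le_one) (simp_all add: bF)
    then show ?thesis by simp
  qed
  have i1: "integrable M (\<lambda>u. u * g u)" by (rule int_uG[OF gm bF])
  have i2: "integrable M (\<lambda>u. (g u)\<^sup>2)"
    by (rule P.integrable_const_bound[where B=1]) (use bF2 in auto)
  have VF': "(\<integral>u. (g u)\<^sup>2 \<partial>M) = C" unfolding g_def C_def by (rule VF)
  have ia: "integrable M (\<lambda>u. C\<^sup>2 * u\<^sup>2)" using int_u2 by (rule integrable_mult_right)
  have ib: "integrable M (\<lambda>u. 2 * C * B * (u * g u))" using i1 by (rule integrable_mult_right)
  have ic: "integrable M (\<lambda>u. B\<^sup>2 * (g u)\<^sup>2)" using i2 by (rule integrable_mult_right)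
  have "0 \<le> (\<integral>u. (C * u - B * g u)\<^sup>2 \<partial>M)" by (rule integral_nonneg_AE) simp
  also have "\<dots> = (\<integral>u. (C\<^sup>2 * u\<^sup>2 - 2 * C * B * (u * g u)) + B\<^sup>2 * (g u)\<^sup>2 \<partial>M)"
    by (rule Bochner_Integration.integral_cong) (simp_all add: power2_eq_square algebra_simps)
  also have "\<dots> = (\<integral>u. C\<^sup>2 * u\<^sup>2 - 2 * C * B * (u * g u) \<partial>M) + (\<integral>u. B\<^sup>2 * (g u)\<^sup>2 \<partial>M)"
    by (rule Bochner_Integration.integral_add[OF Bochner_Integration.integrable_diff[OF ia ib] ic])
  also have "(\<integral>u. C\<^sup>2 * u\<^sup>2 - 2 * C * B * (u * g u) \<partial>M) = (\<integral>u. C\<^sup>2 * u\<^sup>2 \<partial>M) - (\<integral>u. 2 * C * B * (u * g u) \<partial>M)"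
    by (rule Bochner_Integration.integral_diff[OF ia ib])
  also have "(\<integral>u. C\<^sup>2 * u\<^sup>2 \<partial>M) = C\<^sup>2 * A" unfolding A_def by (rule integral_mult_right_zero)
  also have "(\<integral>u. 2 * C * B * (u * g u) \<partial>M) = 2 * C * B * B" unfolding B_def by (rule integral_mult_right_zero)
  also have "(\<integral>u. B\<^sup>2 * (g u)\<^sup>2 \<partial>M) = B\<^sup>2 * C" using VF' by (simp only: integral_mult_right_zero)
  finally have "0 \<le> C * (C * A - B\<^sup>2)" by (simp only: power2_eq_square algebra_simps)
  then have "B\<^sup>2 \<le> C * A" by (simp add: C_def zero_le_mult_iff)
  then show ?thesis by (simp add: A_def B_def C_def g_def)
qed

lemma main:
  assumes pos: "sigma2 f > 0"
  shows "45 * (LINT s|lborel. qfun f s * f s)\<^sup>2 < sigma2 f"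
proof -
  define I where "I = (LINT s|lborel. qfun f s * f s)"
  define A where "A = (\<integral>u. u\<^sup>2 \<partial>M)"
  have iF: "integrable M (\<lambda>u. u * (F u - 1/2))"
    by (rule int_uG[OF _ F_half]) simp
  have "2 * I = (\<integral>u. u * (1/2 - F u) \<partial>M)" unfolding I_def I_eq by (rule I_formula)
  also have "\<dots> = - (\<integral>u. u * (F u - 1/2) \<partial>M)"
    by (subst integral_minus[symmetric]) (auto intro!: Bochner_Integration.integral_cong simp: algebra_simps)
  finally have "(2 * I)\<^sup>2 \<le> A * (1/12)" using CS by (simp add: A_def)
  then have "I\<^sup>2 \<le> A / 48" by (simp add: power2_eq_square)
  moreover have "A > 0" using pos sigma2_eq A_def by simp
  ultimately show ?thesis unfolding I_def[symmetric] sigma2_eq A_def[symmetric] by linarith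
qed

end

theorem mainTheorem3:
  fixes f :: "real \<Rightarrow> real"
  assumes meas: "f \<in> borel_measurable borel"
    and nonneg: "\<And>x. f x \<ge> 0"
    and integrable: "integrable lborel f"
    and total: "(LINT x|lborel. f x) = 1"
    and symm: "\<And>x. f (- x) = f x"
    and fin_var: "integrable lborel (\<lambda>x. x\<^sup>2 * f x)"
    and pos_var: "sigma2 f > 0"
  shows "45 * (LINT s|lborel. qfun f s * f s)\<^sup>2 < sigma2 f"
proof -
  interpret symd f using assms by unfold_locales auto
  show ?thesis using pos_var by (rule main)
qed

end
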